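(* Let $T$ be a complete theory with $SOP_3$, witnessed by an indiscernible sequence $\langle a_i:i<\omega\rangle$ and formulas $\varphi(x;y),\psi(x;y)$ satisfying: (1) $\{\varphi(x;y),\psi(x;y)\}$ is contradictory; (2) there is a sequence $\langle c_j:j<\omega\rangle$ with $\varphi(c_j;a_i)$ whenever $i\le j$ and $\psi(c_j;a_i)$ whenever $i>j$; (3) if $i<j$ then $\{\varphi(x;a_j),\psi(x;a_i)\}$ is contradictory. Then the formula $\rho(x;y,z):=\varphi(x;y)\wedge\psi(x;z)$ has the $\infty$-compatible order property on some set $A'\subseteq P_1$ (where $\langle P_n\rangle$ is the characteristic sequence of $\rho$), and $A'$ can be chosen so that the characteristic sequence restricted to $A'$ has support $2$.
   Context: Work in a sufficiently saturated model of $T$. For a formula $\rho(x;w)$ its characteristic sequence is $P_n(w_1,\dots,w_n):=\exists x\bigwedge_{i\le n}\rho(x;w_i)$ (here $w=(y,z)$). $\rho$ has the $\infty$-compatible order property on $A'\subseteq P_1$ if there exist $\langle \alpha_i,\beta_i:i<\omega\rangle$ in $A'$ such that for all $m<\omega$ and all indices, $P_{2m}(\alpha_{i_1},\beta_{j_1},\dots,\alpha_{i_m},\beta_{j_m})$ holds iff $\max\{i_1,\dots,i_m\}<\min\{j_1,\dots,j_m\}$. The sequence restricted to $A'$ has support $2$ if for all $n$ and all $w_1,\dots,w_n\in A'$, $P_n(w_1,\dots,w_n)$ holds iff $P_2(w_i,w_j)$ holds for all $i,j\le n$. *)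

theory Defs
  imports Main "HOL-Library.Countable_Set"
begin

datatype 'f trm = Var nat | Fun 'f "'f trm list"

datatype ('f, 'p) fm =
    Bot
  | Atom 'p "'f trm list"
  | Eq "'f trm" "'f trm"
  | Neg "('f, 'p) fm"
  | Conj "('f, 'p) fm" "('f, 'p) fm"
  | Ex nat "('f, 'p) fm"

text \<open>A structure with universe the whole type 'a (hence nonempty).
  Symbols are interpreted on argument lists of every length.\<close>
record ('f, 'p, 'a) struc =
  FnI :: "'f \<Rightarrow> 'a list \<Rightarrow> 'a"
  RlI :: "'p \<Rightarrow> 'a list \<Rightarrow> bool"

fun evalt :: "('f \<Rightarrow> 'a list \<Rightarrow> 'a) \<Rightarrow> (nat \<Rightarrow> 'a) \<Rightarrow> 'f trm \<Rightarrow> 'a" where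
  "evalt F e (Var n) = e n"
| "evalt F e (Fun f ts) = F f (map (evalt F e) ts)"

fun fvt :: "'f trm \<Rightarrow> nat set" where
  "fvt (Var n) = {n}"
| "fvt (Fun f ts) = (\<Union>t\<in>set ts. fvt t)"

fun fv :: "('f, 'p) fm \<Rightarrow> nat set" where
  "fv Bot = {}"
| "fv (Atom p ts) = (\<Union>t\<in>set ts. fvt t)"
| "fv (Eq s t) = fvt s \<union> fvt t"
| "fv (Neg \<phi>) = fv \<phi>"
| "fv (Conj \<phi> \<psi>) = fv \<phi> \<union> fv \<psi>"
| "fv (Ex x \<phi>) = fv \<phi> - {x}"

fun sat :: "('f, 'p, 'a, 'b) struc_scheme \<Rightarrow> (nat \<Rightarrow> 'a) \<Rightarrow> ('f, 'p) fm \<Rightarrow> bool" where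
  "sat M e Bot = False"
| "sat M e (Atom p ts) = RlI M p (map (evalt (FnI M) e) ts)"
| "sat M e (Eq s t) = (evalt (FnI M) e s = evalt (FnI M) e t)"
| "sat M e (Neg \<phi>) = (\<not> sat M e \<phi>)"
| "sat M e (Conj \<phi> \<psi>) = (sat M e \<phi> \<and> sat M e \<psi>)"
| "sat M e (Ex x \<phi>) = (\<exists>a. sat M (e(x := a)) \<phi>)"

definition holds :: "('f, 'p, 'a, 'b) struc_scheme \<Rightarrow> ('f, 'p) fm \<Rightarrow> 'a list \<Rightarrow> bool" where
  "holds M \<theta> vs = sat M (\<lambda>i. if i < length vs then vs ! i else undefined) \<theta>"

text \<open>A pair \<open>(\<theta>, b)\<close> stands for \<open>\<theta>(x; b)\<close>.\<close>
definition aleph1_saturated :: "('f, 'p, 'a, 'b) struc_scheme \<Rightarrow> bool" where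
  "aleph1_saturated M \<longleftrightarrow>
     (\<forall>(n::nat) (\<Sigma> :: (('f, 'p) fm \<times> 'a list) set).
        countable (\<Union>(\<theta>, b)\<in>\<Sigma>. set b) \<longrightarrow>
        (\<forall>F \<subseteq> \<Sigma>. finite F \<longrightarrow>
            (\<exists>c. length c = n \<and> (\<forall>(\<theta>, b)\<in>F. holds M \<theta> (c @ b)))) \<longrightarrow>
        (\<exists>c. length c = n \<and> (\<forall>(\<theta>, b)\<in>\<Sigma>. holds M \<theta> (c @ b))))"

definition indiscernible ::
  "('f, 'p, 'a, 'b) struc_scheme \<Rightarrow> nat \<Rightarrow> (nat \<Rightarrow> 'a list) \<Rightarrow> bool" where
  "indiscernible M k a \<longleftrightarrow>
     (\<forall>i. length (a i) = k) \<and>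
     (\<forall>(\<theta> :: ('f, 'p) fm) (is :: nat list) (js :: nat list).
        length is = length js \<longrightarrow> sorted_wrt (<) is \<longrightarrow> sorted_wrt (<) js \<longrightarrow>
        fv \<theta> \<subseteq> {..< length is * k} \<longrightarrow>
        (holds M \<theta> (concat (map a is)) \<longleftrightarrow> holds M \<theta> (concat (map a js))))"

text \<open>Here \<open>x\<close> has length \<open>nx\<close>, \<open>y\<close> and \<open>z\<close> have length \<open>ny\<close>;
  a parameter \<open>w = (y, z)\<close> is a pair of \<open>ny\<close>-tuples.\<close>
definition rho ::
  "('f, 'p, 'a, 'b) struc_scheme \<Rightarrow> ('f, 'p) fm \<Rightarrow> ('f, 'p) fm \<Rightarrow> 'a list \<Rightarrow> 'a list \<times> 'a list \<Rightarrow> bool" where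
  "rho M \<phi> \<psi> c w \<longleftrightarrow> holds M \<phi> (c @ fst w) \<and> holds M \<psi> (c @ snd w)"

text \<open>\<open>charP \<dots> ws\<close> is \<open>P\<^sub>n(w\<^sub>1,\<dots>,w\<^sub>n)\<close> for \<open>ws = [w\<^sub>1,\<dots>,w\<^sub>n]\<close>:
  \<open>\<exists>x. \<And>\<^sub>i \<rho>(x; w\<^sub>i)\<close>.\<close>
definition charP ::
  "('f, 'p, 'a, 'b) struc_scheme \<Rightarrow> nat \<Rightarrow> ('f, 'p) fm \<Rightarrow> ('f, 'p) fm \<Rightarrow> ('a list \<times> 'a list) list \<Rightarrow> bool" where
  "charP M nx \<phi> \<psi> ws \<longleftrightarrow> (\<exists>c. length c = nx \<and> (\<forall>w\<in>set ws. rho M \<phi> \<psi> c w))"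

definition P1 ::
  "('f, 'p, 'a, 'b) struc_scheme \<Rightarrow> nat \<Rightarrow> nat \<Rightarrow> ('f, 'p) fm \<Rightarrow> ('f, 'p) fm \<Rightarrow> ('a list \<times> 'a list) set" where
  "P1 M nx ny \<phi> \<psi> = {w. length (fst w) = ny \<and> length (snd w) = ny \<and> charP M nx \<phi> \<psi> [w]}"

text \<open>\<open>\<infinity>\<close>-compatible order property on \<open>A'\<close> (for \<open>m \<ge> 1\<close>; the case
  \<open>m = 0\<close> is degenerate).\<close>
definition inf_cop_on ::
  "('f, 'p, 'a, 'b) struc_scheme \<Rightarrow> nat \<Rightarrow> ('f, 'p) fm \<Rightarrow> ('f, 'p) fm \<Rightarrow> ('a list \<times> 'a list) set \<Rightarrow> bool" where
  "inf_cop_on M nx \<phi> \<psi> A' \<longleftrightarrow>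
     (\<exists>\<alpha> \<beta> :: nat \<Rightarrow> 'a list \<times> 'a list.
        (\<forall>i. \<alpha> i \<in> A' \<and> \<beta> i \<in> A') \<and>
        (\<forall>(is :: nat list) (js :: nat list).
           length is = length js \<longrightarrow> is \<noteq> [] \<longrightarrow>
           (charP M nx \<phi> \<psi> (concat (map2 (\<lambda>i j. [\<alpha> i, \<beta> j]) is js))
              \<longleftrightarrow> Max (set is) < Min (set js))))"

definition support2_on ::
  "('f, 'p, 'a, 'b) struc_scheme \<Rightarrow> nat \<Rightarrow> ('f, 'p) fm \<Rightarrow> ('f, 'p) fm \<Rightarrow> ('a list \<times> 'a list) set \<Rightarrow> bool" where
  "support2_on M nx \<phi> \<psi> A' \<longleftrightarrow>
     (\<forall>ws. set ws \<subseteq> A' \<longrightarrow>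
        (charP M nx \<phi> \<psi> ws \<longleftrightarrow> (\<forall>u\<in>set ws. \<forall>v\<in>set ws. charP M nx \<phi> \<psi> [u, v])))"

end

theory Submission imports Defs begin

fun rent :: "(nat \<Rightarrow> nat) \<Rightarrow> 'f trm \<Rightarrow> 'f trm" where
  "rent s (Var n) = Var (s n)"
| "rent s (Fun f ts) = Fun f (map (rent s) ts)"

fun renf :: "(nat \<Rightarrow> nat) \<Rightarrow> ('f,'p) fm \<Rightarrow> ('f,'p) fm" where
  "renf s Bot = Bot"
| "renf s (Atom p ts) = Atom p (map (rent s) ts)"
| "renf s (Eq t u) = Eq (rent s t) (rent s u)"
| "renf s (Neg f) = Neg (renf s f)"
| "renf s (Conj f g) = Conj (renf s f) (renf s g)"
| "renf s (Ex x f) = Ex (s x) (renf s f)"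

lemma evalt_rent: "evalt F e (rent s t) = evalt F (e \<circ> s) t"
  by (induction t) (auto cong: map_cong)

lemma sat_renf: "inj s \<Longrightarrow> sat M e (renf s f) = sat M (e \<circ> s) f"
proof (induction f arbitrary: e)
  case (Ex x f)
  have "\<And>a. (e(s x := a)) \<circ> s = (e \<circ> s)(x := a)"
    using Ex.prems by (auto simp: fun_eq_iff inj_eq)
  then show ?case using Ex.IH[OF Ex.prems] by (simp only: renf.simps sat.simps)
qed (auto simp: evalt_rent comp_def)

lemma evalt_coinc: "(\<forall>x\<in>fvt t. e x = e' x) \<Longrightarrow> evalt F e t = evalt F e' t"
  by (induction t) (auto cong: map_cong)

lemma sat_coinc: "(\<forall>x\<in>fv f. e x = e' x) \<Longrightarrow> sat M e f = sat M e' f"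
proof (induction f arbitrary: e e')
  case (Atom p ts)
  have "map (evalt (FnI M) e) ts = map (evalt (FnI M) e') ts"
  proof (rule map_cong[OF refl])
    fix t assume "t \<in> set ts"
    then show "evalt (FnI M) e t = evalt (FnI M) e' t"
      by (intro evalt_coinc) (use Atom in auto)
  qed
  then show ?case by (simp only: sat.simps)
next
  case (Eq t u) then show ?case using evalt_coinc[of t e e'] evalt_coinc[of u e e'] by auto
next
  case (Ex x f)
  have "\<And>a. sat M (e(x:=a)) f = sat M (e'(x:=a)) f"
    by (rule Ex.IH) (use Ex.prems in auto)
  then show ?case by simp
next
  case (Conj f g)
  have "sat M e f = sat M e' f" by (rule Conj.IH(1)) (use Conj.prems in auto)
  moreover have "sat M e g = sat M e' g" by (rule Conj.IH(2)) (use Conj.prems in auto)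
  ultimately show ?case by simp
qed auto

lemma swap_holds:
  assumes fvp: "fv \<psi> \<subseteq> {..< nx + ny}" and lc: "length c = nx" and lb: "length b = ny"
  shows "holds M (renf (\<lambda>i. if i < nx then ny + i else if i < nx+ny then i - nx else i) \<psi>) (b @ c)
         = holds M \<psi> (c @ b)"
proof -
  define s where "s = (\<lambda>i::nat. if i < nx then ny + i else if i < nx+ny then i - nx else i)"
  have inj: "inj s" unfolding s_def inj_def by auto
  let ?e = "\<lambda>i. if i < length (b@c) then (b@c) ! i else undefined"
  let ?e' = "\<lambda>i. if i < length (c@b) then (c@b) ! i else undefined"
  have "holds M (renf s \<psi>) (b @ c) = sat M (?e \<circ> s) \<psi>"
    unfolding holds_def by (rule sat_renf[OF inj])
  also have "\<dots> = sat M ?e' \<psi>"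
  proof (rule sat_coinc, rule ballI)
    fix x assume "x \<in> fv \<psi>"
    then have "x < nx + ny" using fvp by auto
    then show "(?e \<circ> s) x = ?e' x" using lc lb
      by (auto simp: s_def nth_append)
  qed
  finally show ?thesis unfolding holds_def s_def .
qed

lemma set_concat_map2:
  "length xs = length ys \<Longrightarrow>
   set (concat (map2 (\<lambda>i j. [f i, g j]) xs ys)) = f ` set xs \<union> g ` set ys"
proof (induction xs arbitrary: ys)
  case Nil then show ?case by simp
next
  case (Cons i xs) then show ?case by (cases ys) auto
qed

lemma map_concat_map2:
  "concat (map2 (\<lambda>i j. [f (g i), f (h j)]) xs ys) = map f (concat (map2 (\<lambda>i j. [g i, h j]) xs ys))"
proof (induction xs arbitrary: ys)
  case Nil then show ?case by simp
next
  case (Cons i xs) then show ?case by (cases ys) auto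
qed

theorem mainTheorem8:
  fixes M :: "('f, 'p, 'a) struc"
    and \<phi> \<psi> :: "('f, 'p) fm"
    and nx ny :: nat
    and a :: "nat \<Rightarrow> 'a list"
  assumes sat: "aleph1_saturated M"
    and fv_phi: "fv \<phi> \<subseteq> {..< nx + ny}"
    and fv_psi: "fv \<psi> \<subseteq> {..< nx + ny}"
    and ind: "indiscernible M ny a"
    and sop1: "\<not> (\<exists>c b. length c = nx \<and> length b = ny \<and> holds M \<phi> (c @ b) \<and> holds M \<psi> (c @ b))"
    and sop2: "\<exists>c :: nat \<Rightarrow> 'a list. \<forall>j. length (c j) = nx \<and>
                  (\<forall>i. (i \<le> j \<longrightarrow> holds M \<phi> (c j @ a i)) \<and> (j < i \<longrightarrow> holds M \<psi> (c j @ a i)))"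
    and sop3: "\<forall>i j. i < j \<longrightarrow>
                  \<not> (\<exists>c. length c = nx \<and> holds M \<phi> (c @ a j) \<and> holds M \<psi> (c @ a i))"
  shows "\<exists>A' \<subseteq> P1 M nx ny \<phi> \<psi>. inf_cop_on M nx \<phi> \<psi> A' \<and> support2_on M nx \<phi> \<psi> A'"
proof -
  obtain c :: "nat \<Rightarrow> 'a list" where c: "\<And>j. length (c j) = nx"
    "\<And>i j. i \<le> j \<Longrightarrow> holds M \<phi> (c j @ a i)" "\<And>i j. j < i \<Longrightarrow> holds M \<psi> (c j @ a i)"
    using sop2 by metis
  have la: "\<And>i. length (a i) = ny" using ind unfolding indiscernible_def by blast
  define sw where "sw = (\<lambda>i::nat. if i < nx then ny + i else if i < nx+ny then i - nx else i)"
  define \<psi>' where "\<psi>' = renf sw \<psi>"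
  have swp: "\<And>b d. length d = nx \<Longrightarrow> length b = ny \<Longrightarrow> holds M \<psi>' (b @ d) = holds M \<psi> (d @ b)"
    unfolding \<psi>'_def sw_def by (rule swap_holds[OF fv_psi])
  define \<Sigma> where "\<Sigma> = range (\<lambda>j. (\<psi>', c j))"
  have cnt: "countable (\<Union>(\<theta>, p)\<in>\<Sigma>. set p)"
  proof -
    have "(\<Union>(\<theta>, p)\<in>\<Sigma>. set p) = (\<Union>j. set (c j))" unfolding \<Sigma>_def by auto
    then show ?thesis by (simp add: countable_finite)
  qed
  have fin: "\<forall>F \<subseteq> \<Sigma>. finite F \<longrightarrow>
            (\<exists>d. length d = ny \<and> (\<forall>(\<theta>, p)\<in>F. holds M \<theta> (d @ p)))"
  proof (intro allI impI)
    fix F assume F: "F \<subseteq> \<Sigma>" "finite F"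
    then obtain J where J: "finite J" "F = (\<lambda>j. (\<psi>', c j)) ` J"
      unfolding \<Sigma>_def by (metis finite_subset_image)
    define N where "N = Suc (Sum J)"
    have "\<forall>(\<theta>, p)\<in>F. holds M \<theta> (a N @ p)"
    proof
      fix x assume "x \<in> F"
      then obtain j where j: "j \<in> J" "x = (\<psi>', c j)" using J by auto
      have "j < N" unfolding N_def using member_le_sum[OF j(1), of id] J(1) by simp
      then have "holds M \<psi> (c j @ a N)" by (rule c(3))
      then show "case x of (\<theta>, p) \<Rightarrow> holds M \<theta> (a N @ p)"
        using j swp[OF c(1) la] by simp
    qed
    then show "\<exists>d. length d = ny \<and> (\<forall>(\<theta>, p)\<in>F. holds M \<theta> (d @ p))" using la by blast
  qed
  obtain b where b: "length b = ny" "\<forall>(\<theta>, p)\<in>\<Sigma>. holds M \<theta> (b @ p)"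
    using sat cnt fin unfolding aleph1_saturated_def by blast
  have bpsi: "\<And>j. holds M \<psi> (c j @ b)"
    using b swp[OF c(1) b(1)] unfolding \<Sigma>_def by auto
  define pt where "pt = (\<lambda>p::nat \<times> nat option. (a (fst p), case snd p of None \<Rightarrow> b | Some l \<Rightarrow> a l))"
  define lt where "lt = (\<lambda>(k::nat) lo. case lo of None \<Rightarrow> True | Some l \<Rightarrow> k < l)"
  define S where "S = {p. lt (fst p) (snd p)}"
  have key: "charP M nx \<phi> \<psi> (map pt ps) \<longleftrightarrow> (\<forall>p\<in>set ps. \<forall>q\<in>set ps. lt (fst p) (snd q))"
    if ps: "set ps \<subseteq> S" for ps
  proof
    assume "charP M nx \<phi> \<psi> (map pt ps)"
    then obtain d where d: "length d = nx" "\<And>w. w \<in> set (map pt ps) \<Longrightarrow> rho M \<phi> \<psi> d w"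
      unfolding charP_def by blast
    show "\<forall>p\<in>set ps. \<forall>q\<in>set ps. lt (fst p) (snd q)"
    proof (intro ballI)
      fix p q assume p: "p \<in> set ps" and q: "q \<in> set ps"
      have hp: "holds M \<phi> (d @ a (fst p))" using d(2)[of "pt p"] p unfolding rho_def pt_def by auto
      have hq: "holds M \<psi> (d @ (case snd q of None \<Rightarrow> b | Some l \<Rightarrow> a l))"
        using d(2)[of "pt q"] q unfolding rho_def pt_def by auto
      show "lt (fst p) (snd q)"
      proof (cases "snd q")
        case None then show ?thesis unfolding lt_def by simp
      next
        case (Some l)
        have "\<not> l < fst p" using sop3 hp hq d(1) Some by auto
        moreover have "l \<noteq> fst p" using sop1 hp hq d(1) Some la by auto
        ultimately show ?thesis unfolding lt_def using Some by simp
      qed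
    qed
  next
    assume hall: "\<forall>p\<in>set ps. \<forall>q\<in>set ps. lt (fst p) (snd q)"
    define K where "K = Max (insert 0 (fst ` set ps))"
    have Kin: "K \<in> insert 0 (fst ` set ps)" unfolding K_def by (rule Max_in) auto
    have Kge: "\<And>p. p \<in> set ps \<Longrightarrow> fst p \<le> K" unfolding K_def by (rule Max_ge) auto
    have "rho M \<phi> \<psi> (c K) w" if w: "w \<in> set (map pt ps)" for w
    proof -
      obtain p where p: "p \<in> set ps" "w = pt p" using w by auto
      have "holds M \<psi> (c K @ (case snd p of None \<Rightarrow> b | Some l \<Rightarrow> a l))"
      proof (cases "snd p")
        case None then show ?thesis using bpsi by simp
      next
        case (Some l)
        have "K < l"
        proof (cases "K = 0")
          case True
          have "lt (fst p) (snd p)" using p ps unfolding S_def by auto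
          then show ?thesis using True Some unfolding lt_def by simp
        next
          case False
          then obtain q where q: "q \<in> set ps" "K = fst q" using Kin by auto
          have "lt (fst q) (snd p)" using bspec[OF bspec[OF hall q(1)] p(1)] .
          then show ?thesis using Some q(2) unfolding lt_def by simp
        qed
        then show ?thesis using c(3) Some by simp
      qed
      moreover have "holds M \<phi> (c K @ a (fst p))" using c(2) Kge[OF p(1)] by simp
      ultimately show ?thesis unfolding rho_def p(2) pt_def by simp
    qed
    then show "charP M nx \<phi> \<psi> (map pt ps)" unfolding charP_def using c(1) by blast
  qed
  define A' where "A' = pt ` S"
  have sub: "A' \<subseteq> P1 M nx ny \<phi> \<psi>"
  proof
    fix w assume "w \<in> A'"
    then obtain p where p: "p \<in> S" "w = pt p" unfolding A'_def by auto
    have "charP M nx \<phi> \<psi> (map pt [p])" using key[of "[p]"] p(1) unfolding S_def by simp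
    moreover have "length (fst w) = ny" "length (snd w) = ny" using p la b(1)
      unfolding pt_def by (auto split: option.split)
    ultimately show "w \<in> P1 M nx ny \<phi> \<psi>" unfolding P1_def using p(2) by simp
  qed
  have supp: "support2_on M nx \<phi> \<psi> A'"
    unfolding support2_on_def
  proof (intro allI impI)
    fix ws assume ws: "set ws \<subseteq> A'"
    define ps where "ps = map (\<lambda>w. SOME p. p \<in> S \<and> w = pt p) ws"
    have ex: "\<exists>p. p \<in> S \<and> w = pt p" if "w \<in> set ws" for w
      using ws that unfolding A'_def by blast
    have ps: "ws = map pt ps" "set ps \<subseteq> S"
    proof -
      have "(SOME p. p \<in> S \<and> w = pt p) \<in> S \<and> w = pt (SOME p. p \<in> S \<and> w = pt p)"
        if "w \<in> set ws" for w using someI_ex[OF ex[OF that]] .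
      note H = this
      have "map (pt \<circ> (\<lambda>w. SOME p. p \<in> S \<and> w = pt p)) ws = ws"
      proof (rule map_idI)
        fix w assume "w \<in> set ws"
        from H[OF this] show "(pt \<circ> (\<lambda>w. SOME p. p \<in> S \<and> w = pt p)) w = w" by simp
      qed
      then show "ws = map pt ps" unfolding ps_def map_map by simp
      show "set ps \<subseteq> S" unfolding ps_def using H by auto
    qed
    have "charP M nx \<phi> \<psi> ws \<longleftrightarrow> (\<forall>p\<in>set ps. \<forall>q\<in>set ps. lt (fst p) (snd q))"
      using key[OF ps(2)] ps(1) by simp
    also have "\<dots> \<longleftrightarrow> (\<forall>p\<in>set ps. \<forall>q\<in>set ps. charP M nx \<phi> \<psi> (map pt [p, q]))"
    proof -
      have "charP M nx \<phi> \<psi> (map pt [p, q]) \<longleftrightarrow> lt (fst p) (snd q) \<and> lt (fst q) (snd p) \<and>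
              lt (fst p) (snd p) \<and> lt (fst q) (snd q)" if "p \<in> set ps" "q \<in> set ps" for p q
      proof -
        have "set [p, q] \<subseteq> S" using that ps(2) by auto
        from key[OF this] show ?thesis by (simp only: list.set ball_simps conj_ac simp_thms)
      qed
      moreover have "lt (fst p) (snd p)" if "p \<in> set ps" for p using that ps(2) unfolding S_def by auto
      ultimately show ?thesis by meson
    qed
    also have "\<dots> \<longleftrightarrow> (\<forall>u\<in>set ws. \<forall>v\<in>set ws. charP M nx \<phi> \<psi> [u, v])"
      using ps(1) by auto
    finally show "charP M nx \<phi> \<psi> ws \<longleftrightarrow> (\<forall>u\<in>set ws. \<forall>v\<in>set ws. charP M nx \<phi> \<psi> [u, v])" .
  qed
  define al where "al = (\<lambda>i::nat. ((2*i+3, None) :: nat \<times> nat option))"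
  define be where "be = (\<lambda>j::nat. ((0, Some (2*j+2)) :: nat \<times> nat option))"
  have cop: "inf_cop_on M nx \<phi> \<psi> A'"
    unfolding inf_cop_on_def
  proof (rule exI[of _ "pt \<circ> al"], rule exI[of _ "pt \<circ> be"], rule conjI)
    show "\<forall>i. (pt \<circ> al) i \<in> A' \<and> (pt \<circ> be) i \<in> A'"
      unfolding A'_def S_def al_def be_def lt_def by auto
  next
    show "\<forall>xs ys. length xs = length ys \<longrightarrow> xs \<noteq> [] \<longrightarrow>
       (charP M nx \<phi> \<psi> (concat (map2 (\<lambda>i j. [(pt \<circ> al) i, (pt \<circ> be) j]) xs ys))
        \<longleftrightarrow> Max (set xs) < Min (set ys))"
    proof (intro allI impI)
    fix xs ys :: "nat list" assume len: "length xs = length ys" and ne: "xs \<noteq> []"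
    have ne2: "ys \<noteq> []" using len ne by auto
    have eq: "concat (map2 (\<lambda>i j. [(pt \<circ> al) i, (pt \<circ> be) j]) xs ys)
          = map pt (concat (map2 (\<lambda>i j. [al i, be j]) xs ys))"
      using map_concat_map2[of pt al be xs ys] by (simp add: comp_def)
    have st: "set (concat (map2 (\<lambda>i j. [al i, be j]) xs ys)) = al ` set xs \<union> be ` set ys"
      by (rule set_concat_map2[OF len])
    have inS: "set (concat (map2 (\<lambda>i j. [al i, be j]) xs ys)) \<subseteq> S"
      unfolding st S_def al_def be_def lt_def by auto
    have "charP M nx \<phi> \<psi> (concat (map2 (\<lambda>i j. [(pt \<circ> al) i, (pt \<circ> be) j]) xs ys))
        \<longleftrightarrow> (\<forall>p\<in>set (concat (map2 (\<lambda>i j. [al i, be j]) xs ys)). \<forall>q\<in>set (concat (map2 (\<lambda>i j. [al i, be j]) xs ys)). lt (fst p) (snd q))"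
      unfolding eq by (rule key[OF inS])
    also have "\<dots> \<longleftrightarrow> (\<forall>i\<in>set xs. \<forall>j\<in>set ys. i < j)"
      unfolding st
    proof
      assume H: "\<forall>p\<in>al ` set xs \<union> be ` set ys. \<forall>q\<in>al ` set xs \<union> be ` set ys. lt (fst p) (snd q)"
      show "\<forall>i\<in>set xs. \<forall>j\<in>set ys. i < j"
      proof (intro ballI)
        fix i j assume i: "i \<in> set xs" and j: "j \<in> set ys"
        have "al i \<in> al ` set xs \<union> be ` set ys" "be j \<in> al ` set xs \<union> be ` set ys" using i j by auto
        then have "lt (fst (al i)) (snd (be j))" using H by blast
        then show "i < j" unfolding al_def be_def lt_def by simp
      qed
    next
      assume H: "\<forall>i\<in>set xs. \<forall>j\<in>set ys. i < j"
      show "\<forall>p\<in>al ` set xs \<union> be ` set ys. \<forall>q\<in>al ` set xs \<union> be ` set ys. lt (fst p) (snd q)"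
      proof (intro ballI)
        fix p q assume p: "p \<in> al ` set xs \<union> be ` set ys" and q: "q \<in> al ` set xs \<union> be ` set ys"
        show "lt (fst p) (snd q)"
        proof (cases "q \<in> al ` set xs")
          case True then show ?thesis unfolding al_def lt_def by auto
        next
          case False
          then obtain j where j: "j \<in> set ys" "q = be j" using q by auto
          show ?thesis
          proof (cases "p \<in> al ` set xs")
            case True
            then obtain i where i: "i \<in> set xs" "p = al i" by auto
            have "i < j" using H i(1) j(1) by blast
            then show ?thesis unfolding i(2) j(2) al_def be_def lt_def by simp
          next
            case False
            then obtain j' where "p = be j'" using p by auto
            then show ?thesis unfolding j(2) be_def lt_def by simp
          qed
        qed
      qed
    qed
    also have "\<dots> \<longleftrightarrow> Max (set xs) < Min (set ys)"
      using ne ne2 by (auto simp: Max_less_iff Min_gr_iff)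
    finally show "charP M nx \<phi> \<psi> (concat (map2 (\<lambda>i j. [(pt \<circ> al) i, (pt \<circ> be) j]) xs ys))
        \<longleftrightarrow> Max (set xs) < Min (set ys)" .
  qed
  qed
  show ?thesis using sub cop supp by blast
qed

end
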